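(* Let $(\theta^-,\theta^+)$ be the maximal open interval containing $0$ on which the function $\gamma$ exists. Then $\tilde\theta(\theta)=\theta$ is the only continuously differentiable function $\tilde\theta:(\theta^-,\theta^+)\to(\theta^-,\theta^+)$ with $\tilde\theta(0)=0$ and $f_{\mathbf{u}_0}(\tilde\theta(\theta),\theta)=0$ for all $\theta\in(\theta^-,\theta^+)$, where $f_{\mathbf{u}_0}(\tilde\theta,\theta):=\mathbf{t}_2^d(\gamma(\tilde\theta))\cdot\mathbf{t}_4^r-\mathbf{t}_2^d(\gamma(\theta))\cdot\mathbf{t}_4^r$. The same holds with $f_{\mathbf{u}_0}$ replaced by $f_{\mathbf{v}_0}(\tilde\theta,\theta):=\mathbf{t}_3^d(\tilde\theta)\cdot\mathbf{t}_1^r-\mathbf{t}_3^d(\theta)\cdot\mathbf{t}_1^r$.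
   Context: Fix $\mathbf{t}_1^r,\dots,\mathbf{t}_4^r\in\mathbb{R}^3$ with $\mathbf{t}_i^r\cdot(\mathbf{t}_j^r\times\mathbf{t}_k^r)\neq0$ for $ijk\in\{123,234,341,412\}$. For nonzero $\mathbf{t}$ let $\mathbf{R}_{\mathbf{t}}(\varphi):=|\mathbf{t}|^{-2}\mathbf{t}\otimes\mathbf{t}+\cos\varphi(\mathbf{I}-|\mathbf{t}|^{-2}\mathbf{t}\otimes\mathbf{t})+|\mathbf{t}|^{-1}\sin\varphi(\mathbf{t}\times)$. Set $\mathbf{t}_2^d(\gamma):=\mathbf{R}_{\mathbf{t}_1^r}(\gamma)\mathbf{t}_2^r$, $\mathbf{t}_3^d(\theta):=\mathbf{R}_{\mathbf{t}_4^r}(\theta)\mathbf{t}_3^r$. The function $\gamma$ is the unique $C^1$ function with $\gamma(0)=0$, $\mathbf{t}_2^d(\gamma(\theta))\cdot\mathbf{t}_3^d(\theta)=\mathbf{t}_2^r\cdot\mathbf{t}_3^r$, and such that the four quantities $[\mathbf{t}_1^r\cdot(\mathbf{t}_2^d(\gamma(\theta))\times\mathbf{t}_3^d(\theta))][\mathbf{t}_1^r\cdot(\mathbf{t}_2^r\times\mathbf{t}_3^r)]$, $[\mathbf{t}_2^d(\gamma(\theta))\cdot(\mathbf{t}_3^d(\theta)\times\mathbf{t}_4^r)][\mathbf{t}_2^r\cdot(\mathbf{t}_3^r\times\mathbf{t}_4^r)]$, $[\mathbf{t}_3^d(\theta)\cdot(\mathbf{t}_4^r\times\mathbf{t}_1^r)][\mathbf{t}_3^r\cdot(\mathbf{t}_4^r\times\mathbf{t}_1^r)]$,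 $[\mathbf{t}_4^r\cdot(\mathbf{t}_1^r\times\mathbf{t}_2^d(\gamma(\theta)))][\mathbf{t}_4^r\cdot(\mathbf{t}_1^r\times\mathbf{t}_2^r)]$ are positive; it is analytic with $\gamma'(\theta)=\frac{|\mathbf{t}_1^r|}{|\mathbf{t}_4^r|}\frac{\mathbf{t}_2^d(\gamma(\theta))\cdot(\mathbf{t}_3^d(\theta)\times\mathbf{t}_4^r)}{\mathbf{t}_1^r\cdot(\mathbf{t}_2^d(\gamma(\theta))\times\mathbf{t}_3^d(\theta))}$. *)

theory Defs
  imports "HOL-Analysis.Analysis"
begin

definition trip :: "real^3 \<Rightarrow> real^3 \<Rightarrow> real^3 \<Rightarrow> real" where
  "trip a b c = a \<bullet> cross3 b c"

definition Rot :: "real^3 \<Rightarrow> real \<Rightarrow> real^3 \<Rightarrow> real^3" where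
  "Rot t phi v =
     ((t \<bullet> v) / (norm t)^2) *\<^sub>R t
     + cos phi *\<^sub>R (v - ((t \<bullet> v) / (norm t)^2) *\<^sub>R t)
     + (sin phi / norm t) *\<^sub>R cross3 t v"

definition t2d :: "real^3 \<Rightarrow> real^3 \<Rightarrow> real \<Rightarrow> real^3" where
  "t2d t1 t2 g = Rot t1 g t2"

definition t3d :: "real^3 \<Rightarrow> real^3 \<Rightarrow> real \<Rightarrow> real^3" where
  "t3d t4 t3 th = Rot t4 th t3"

definition gamma_sol ::
  "real^3 \<Rightarrow> real^3 \<Rightarrow> real^3 \<Rightarrow> real^3 \<Rightarrow> real set \<Rightarrow> (real \<Rightarrow> real) \<Rightarrow> bool" where
  "gamma_sol t1 t2 t3 t4 J g \<longleftrightarrow>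
     g C1_differentiable_on J \<and> g 0 = 0 \<and>
     (\<forall>th\<in>J.
        t2d t1 t2 (g th) \<bullet> t3d t4 t3 th = t2 \<bullet> t3 \<and>
        trip t1 (t2d t1 t2 (g th)) (t3d t4 t3 th) * trip t1 t2 t3 > 0 \<and>
        trip (t2d t1 t2 (g th)) (t3d t4 t3 th) t4 * trip t2 t3 t4 > 0 \<and>
        trip (t3d t4 t3 th) t4 t1 * trip t3 t4 t1 > 0 \<and>
        trip t4 t1 (t2d t1 t2 (g th)) * trip t4 t1 t2 > 0)"

definition open_int0 :: "real set \<Rightarrow> bool" where
  "open_int0 J \<longleftrightarrow> open J \<and> is_interval J \<and> 0 \<in> J"

definition f_u0 :: "real^3 \<Rightarrow> real^3 \<Rightarrow> real^3 \<Rightarrow> (real \<Rightarrow> real) \<Rightarrow> real \<Rightarrow> real \<Rightarrow> real" where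
  "f_u0 t1 t2 t4 g tt th = t2d t1 t2 (g tt) \<bullet> t4 - t2d t1 t2 (g th) \<bullet> t4"

definition f_v0 :: "real^3 \<Rightarrow> real^3 \<Rightarrow> real^3 \<Rightarrow> real \<Rightarrow> real \<Rightarrow> real" where
  "f_v0 t1 t3 t4 tt th = t3d t4 t3 tt \<bullet> t1 - t3d t4 t3 th \<bullet> t1"

end

theory Submission imports Defs begin

lemma cross_cross3: "cross3 t (cross3 t v) = (t \<bullet> v) *\<^sub>R t - (t \<bullet> t) *\<^sub>R v"
  by (simp add: cross3_simps forall_3)

lemma cross_Rot: "cross3 t (Rot t s v) = cos s *\<^sub>R cross3 t v + (sin s / norm t) *\<^sub>R ((t \<bullet> v) *\<^sub>R t - (t \<bullet> t) *\<^sub>R v)"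
  unfolding Rot_def cross_cross3[symmetric]
  by (simp add: cross_add_right cross_mult_right right_diff_distrib Cross3.right_diff_distrib)

lemma Rot_deriv0:
  assumes "t \<noteq> 0" shows "((\<lambda>s. Rot t s v) has_vector_derivative
     (- sin s *\<^sub>R (v - ((t \<bullet> v) / (norm t)^2) *\<^sub>R t) + (cos s / norm t) *\<^sub>R cross3 t v)) (at s)"
  unfolding Rot_def
  using assms by (auto intro!: derivative_eq_intros)

lemma Rot_deriv:
  assumes "t \<noteq> 0"
  shows "((\<lambda>s. Rot t s v) has_vector_derivative ((1 / norm t) *\<^sub>R cross3 t (Rot t s v))) (at s)"
proof -
  have n: "t \<bullet> t = (norm t)^2" by (simp add: power2_norm_eq_inner)
  have "(1 / norm t) *\<^sub>R cross3 t (Rot t s v) =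
     - sin s *\<^sub>R (v - ((t \<bullet> v) / (norm t)^2) *\<^sub>R t) + (cos s / norm t) *\<^sub>R cross3 t v"
    using assms unfolding cross_Rot n
    by (simp add: algebra_simps power2_eq_square)
  then show ?thesis using Rot_deriv0[OF assms] by simp
qed

lemma part:
  fixes h :: "real \<Rightarrow> real"
  assumes "open I" "0 \<in> I" "inj_on h I" "\<And>a b. F a b = h a - h b"
  shows "\<forall>\<theta>t :: real \<Rightarrow> real.
            (\<theta>t C1_differentiable_on I \<and> \<theta>t ` I \<subseteq> I \<and> \<theta>t 0 = 0 \<and>
             (\<forall>\<theta>\<in>I. F (\<theta>t \<theta>) \<theta> = 0))
            \<longleftrightarrow> (\<forall>\<theta>\<in>I. \<theta>t \<theta> = \<theta>)"
proof (intro allI iffI)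
  fix \<theta>t :: "real \<Rightarrow> real"
  assume H: "\<theta>t C1_differentiable_on I \<and> \<theta>t ` I \<subseteq> I \<and> \<theta>t 0 = 0 \<and> (\<forall>\<theta>\<in>I. F (\<theta>t \<theta>) \<theta> = 0)"
  show "\<forall>\<theta>\<in>I. \<theta>t \<theta> = \<theta>"
  proof
    fix \<theta> assume th: "\<theta> \<in> I"
    then have "\<theta>t \<theta> \<in> I" using H by blast
    moreover have "h (\<theta>t \<theta>) = h \<theta>" using H th assms(4) by auto
    ultimately show "\<theta>t \<theta> = \<theta>" using assms(3) th by (meson inj_onD)
  qed
next
  fix \<theta>t :: "real \<Rightarrow> real"
  assume H: "\<forall>\<theta>\<in>I. \<theta>t \<theta> = \<theta>"
  have "\<theta>t C1_differentiable_on I"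
    unfolding C1_differentiable_on_def
  proof (intro exI[of _ "\<lambda>x. 1"] conjI ballI)
    fix x assume "x \<in> I"
    show "(\<theta>t has_vector_derivative 1) (at x)"
      by (rule has_vector_derivative_transform_within_open[OF has_vector_derivative_id assms(1) \<open>x \<in> I\<close>])
        (use H in auto)
  qed (rule continuous_on_const)
  then show "\<theta>t C1_differentiable_on I \<and> \<theta>t ` I \<subseteq> I \<and> \<theta>t 0 = 0 \<and> (\<forall>\<theta>\<in>I. F (\<theta>t \<theta>) \<theta> = 0)"
    using H assms by auto
qed

lemma inj_deriv:
  fixes f :: "real \<Rightarrow> real"
  assumes I: "is_interval I" and d: "\<And>x. x\<in>I \<Longrightarrow> (f has_real_derivative f' x) (at x)"
    and nz: "\<And>x. x\<in>I \<Longrightarrow> f' x \<noteq> 0"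
  shows "inj_on f I"
proof (rule inj_onI, rule ccontr)
  have key: False if ab: "a \<in> I" "b \<in> I" "a < b" "f a = f b" for a b
  proof -
    have sub: "{a..b} \<subseteq> I"
    proof
      fix x assume "x \<in> {a..b}"
      then have "a \<le> x" "x \<le> b" by simp_all
      then show "x \<in> I" by (rule mem_is_interval_1_I[OF I ab(1) ab(2)])
    qed
    have cont: "continuous_on {a..b} f"
    proof (rule continuous_at_imp_continuous_on, rule ballI)
      fix x assume "x \<in> {a..b}"
      then have "x \<in> I" using sub by auto
      then show "isCont f x" by (rule DERIV_isCont[OF d])
    qed
    have der: "(f has_derivative (\<lambda>h. f' x * h)) (at x)" if "a < x" "x < b" for x
    proof -
      have "x \<in> I" using sub that by auto
      show ?thesis using d[OF \<open>x \<in> I\<close>] unfolding has_field_derivative_def .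
    qed
    obtain z where z: "a < z" "z < b" "(\<lambda>h. f' z * h) = (\<lambda>v. 0)"
      using Rolle_deriv[of a b f "\<lambda>x h. f' x * h", OF ab(3) ab(4) cont der] by blast
    have "f' z = 0" using fun_cong[OF z(3), of 1] by simp
    moreover have "z \<in> I" using sub z by auto
    ultimately show False using nz by blast
  qed
  fix a b assume "a \<in> I" "b \<in> I" "f a = f b" "a \<noteq> b"
  then show False using key[of a b] key[of b a] by linarith
qed


lemma trip_cyc: "trip a b c = trip b c a"
  unfolding trip_def cross3_def inner_vec_def sum_3 vector_def by (simp add: algebra_simps)
lemma trip_skew: "trip a b c = - trip a c b"
  unfolding trip_def cross3_def inner_vec_def sum_3 vector_def by (simp add: algebra_simps)

theorem lemmaA2:
  fixes t1 t2 t3 t4 :: "real^3" and I :: "real set" and \<gamma> :: "real \<Rightarrow> real"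
  assumes "trip t1 t2 t3 \<noteq> 0" "trip t2 t3 t4 \<noteq> 0" "trip t3 t4 t1 \<noteq> 0" "trip t4 t1 t2 \<noteq> 0"
    and I: "open_int0 I"
    and gam: "gamma_sol t1 t2 t3 t4 I \<gamma>"
    and maximal: "\<And>J g. open_int0 J \<Longrightarrow> gamma_sol t1 t2 t3 t4 J g \<Longrightarrow> J \<subseteq> I"
  shows "(\<forall>\<theta>t :: real \<Rightarrow> real.
            (\<theta>t C1_differentiable_on I \<and> \<theta>t ` I \<subseteq> I \<and> \<theta>t 0 = 0 \<and>
             (\<forall>\<theta>\<in>I. f_u0 t1 t2 t4 \<gamma> (\<theta>t \<theta>) \<theta> = 0))
            \<longleftrightarrow> (\<forall>\<theta>\<in>I. \<theta>t \<theta> = \<theta>))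
       \<and> (\<forall>\<theta>t :: real \<Rightarrow> real.
            (\<theta>t C1_differentiable_on I \<and> \<theta>t ` I \<subseteq> I \<and> \<theta>t 0 = 0 \<and>
             (\<forall>\<theta>\<in>I. f_v0 t1 t3 t4 (\<theta>t \<theta>) \<theta> = 0))
            \<longleftrightarrow> (\<forall>\<theta>\<in>I. \<theta>t \<theta> = \<theta>))"
proof -
  have oI: "open I" and iI: "is_interval I" and zI: "0 \<in> I" using I unfolding open_int0_def by auto
  have t1: "t1 \<noteq> 0" using assms(1) unfolding trip_def by auto
  have t4: "t4 \<noteq> 0" using assms(4) unfolding trip_def by auto
  obtain D where D: "\<And>x. x \<in> I \<Longrightarrow> (\<gamma> has_vector_derivative D x) (at x)"
    using gam unfolding gamma_sol_def C1_differentiable_on_def by blast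
  have cond: "\<And>th. th \<in> I \<Longrightarrow> t2d t1 t2 (\<gamma> th) \<bullet> t3d t4 t3 th = t2 \<bullet> t3 \<and>
        trip (t2d t1 t2 (\<gamma> th)) (t3d t4 t3 th) t4 \<noteq> 0 \<and>
        trip (t3d t4 t3 th) t4 t1 \<noteq> 0 \<and>
        trip t4 t1 (t2d t1 t2 (\<gamma> th)) \<noteq> 0"
    using gam unfolding gamma_sol_def by fastforce
  have T3: "((\<lambda>\<theta>. t3d t4 t3 \<theta>) has_vector_derivative (1 / norm t4) *\<^sub>R cross3 t4 (t3d t4 t3 x)) (at x)" for x
    unfolding t3d_def by (rule Rot_deriv[OF t4])
  have T2: "((\<lambda>\<theta>. t2d t1 t2 (\<gamma> \<theta>)) has_vector_derivative
      D x *\<^sub>R ((1 / norm t1) *\<^sub>R cross3 t1 (t2d t1 t2 (\<gamma> x)))) (at x)" if "x \<in> I" for x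
    using vector_diff_chain_at[OF D[OF that] Rot_deriv[OF t1, of t2 "\<gamma> x"]]
    unfolding t2d_def o_def .
  have Dnz: "D x \<noteq> 0" if x: "x \<in> I" for x
  proof
    assume D0: "D x = 0"
    have "((\<lambda>\<theta>. t2d t1 t2 (\<gamma> \<theta>) \<bullet> t3d t4 t3 \<theta>) has_vector_derivative
        (t2d t1 t2 (\<gamma> x) \<bullet> ((1 / norm t4) *\<^sub>R cross3 t4 (t3d t4 t3 x))
         + (D x *\<^sub>R ((1 / norm t1) *\<^sub>R cross3 t1 (t2d t1 t2 (\<gamma> x)))) \<bullet> t3d t4 t3 x)) (at x)"
      by (rule bounded_bilinear.has_vector_derivative[OF bounded_bilinear_inner T2[OF x] T3])
    then have d1: "((\<lambda>\<theta>. t2d t1 t2 (\<gamma> \<theta>) \<bullet> t3d t4 t3 \<theta>) has_real_derivative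
        (1 / norm t4) * trip (t2d t1 t2 (\<gamma> x)) t4 (t3d t4 t3 x)) (at x)"
      using D0 by (simp add: has_real_derivative_iff_has_vector_derivative trip_def)
    have d2: "((\<lambda>\<theta>. t2d t1 t2 (\<gamma> \<theta>) \<bullet> t3d t4 t3 \<theta>) has_real_derivative 0) (at x)"
      by (rule has_field_derivative_transform_within_open[OF DERIV_const oI x]) (use cond in auto)
    have "(1 / norm t4) * trip (t2d t1 t2 (\<gamma> x)) t4 (t3d t4 t3 x) = 0"
      using DERIV_unique[OF d1 d2] .
    moreover have "trip (t2d t1 t2 (\<gamma> x)) t4 (t3d t4 t3 x) \<noteq> 0"
      using cond[OF x] trip_skew by (metis neg_equal_0_iff_equal)
    ultimately show False using t4 by simp
  qed
  have inj1: "inj_on (\<lambda>\<theta>. t2d t1 t2 (\<gamma> \<theta>) \<bullet> t4) I"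
  proof (rule inj_deriv[OF iI])
    fix x assume x: "x \<in> I"
    have "((\<lambda>\<theta>. t2d t1 t2 (\<gamma> \<theta>) \<bullet> t4) has_vector_derivative
        (t2d t1 t2 (\<gamma> x) \<bullet> 0 + (D x *\<^sub>R ((1 / norm t1) *\<^sub>R cross3 t1 (t2d t1 t2 (\<gamma> x)))) \<bullet> t4)) (at x)"
      by (rule bounded_bilinear.has_vector_derivative[OF bounded_bilinear_inner T2[OF x] has_vector_derivative_const])
    then show "((\<lambda>\<theta>. t2d t1 t2 (\<gamma> \<theta>) \<bullet> t4) has_real_derivative
        (D x / norm t1) * trip t4 t1 (t2d t1 t2 (\<gamma> x))) (at x)"
      by (simp add: has_real_derivative_iff_has_vector_derivative trip_def inner_commute)
    show "(D x / norm t1) * trip t4 t1 (t2d t1 t2 (\<gamma> x)) \<noteq> 0"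
      using Dnz[OF x] cond[OF x] t1 by simp
  qed
  have inj2: "inj_on (\<lambda>\<theta>. t3d t4 t3 \<theta> \<bullet> t1) I"
  proof (rule inj_deriv[OF iI])
    fix x assume x: "x \<in> I"
    have "((\<lambda>\<theta>. t3d t4 t3 \<theta> \<bullet> t1) has_vector_derivative
        (t3d t4 t3 x \<bullet> 0 + ((1 / norm t4) *\<^sub>R cross3 t4 (t3d t4 t3 x)) \<bullet> t1)) (at x)"
      by (rule bounded_bilinear.has_vector_derivative[OF bounded_bilinear_inner T3 has_vector_derivative_const])
    then show "((\<lambda>\<theta>. t3d t4 t3 \<theta> \<bullet> t1) has_real_derivative
        (1 / norm t4) * trip t1 t4 (t3d t4 t3 x)) (at x)"
      by (simp add: has_real_derivative_iff_has_vector_derivative trip_def inner_commute)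
    have "trip t1 t4 (t3d t4 t3 x) = trip (t3d t4 t3 x) t1 t4" using trip_cyc by metis
    also have "\<dots> = - trip (t3d t4 t3 x) t4 t1" using trip_skew by metis
    finally show "(1 / norm t4) * trip t1 t4 (t3d t4 t3 x) \<noteq> 0"
      using cond[OF x] t4 by simp
  qed
  show ?thesis
  proof
    show "\<forall>\<theta>t :: real \<Rightarrow> real.
            (\<theta>t C1_differentiable_on I \<and> \<theta>t ` I \<subseteq> I \<and> \<theta>t 0 = 0 \<and>
             (\<forall>\<theta>\<in>I. f_u0 t1 t2 t4 \<gamma> (\<theta>t \<theta>) \<theta> = 0))
            \<longleftrightarrow> (\<forall>\<theta>\<in>I. \<theta>t \<theta> = \<theta>)"
      by (rule part[OF oI zI inj1, where F = "f_u0 t1 t2 t4 \<gamma>"]) (simp only: f_u0_def)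
    show "\<forall>\<theta>t :: real \<Rightarrow> real.
            (\<theta>t C1_differentiable_on I \<and> \<theta>t ` I \<subseteq> I \<and> \<theta>t 0 = 0 \<and>
             (\<forall>\<theta>\<in>I. f_v0 t1 t3 t4 (\<theta>t \<theta>) \<theta> = 0))
            \<longleftrightarrow> (\<forall>\<theta>\<in>I. \<theta>t \<theta> = \<theta>)"
      by (rule part[OF oI zI inj2, where F = "f_v0 t1 t3 t4"]) (simp only: f_v0_def)
  qed
qed
end
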